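(* Let $p\in(0,1]$ and let $(\mathcal M,d,0)$ be a pointed $p$-metric space with $\mathcal M=\{0,x,y\}$ (three distinct points). Put $d_x=d(x,0)$, $d_y=d(y,0)$, $d_{xy}=d(x,y)$. Then for all $a,b\in\mathbb R$, \[\|a\delta(x)+b\delta(y)\|_{\mathcal F_p(\mathcal M)}^p=\min\{|ad_x|^p+|bd_y|^p,\ |(a+b)d_x|^p+|bd_{xy}|^p,\ |(a+b)d_y|^p+|ad_{xy}|^p\}.\]
   Context: A $p$-metric space is a set with $d$ such that $d^p$ is a metric; pointed means a distinguished point $0$. A $p$-Banach space is a complete vector space with a $p$-norm. $\delta(x)$ is evaluation at $x$ on real functions on $\mathcal M$ vanishing at $0$, and $\mathcal F_p(\mathcal M)$ is the completion of $\mathrm{span}\{\delta(x)\}$ under $\|\sum a_i\delta(x_i)\|=\sup\|\sum a_if(x_i)\|_Y$ over $p$-Banach $Y$ and $1$-Lipschitz $f:\mathcal M\to Y$ with $f(0)=0$. *)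

theory Defs
  imports "HOL-Analysis.Analysis"
begin

definition p_metric :: "real \<Rightarrow> 'a set \<Rightarrow> ('a \<Rightarrow> 'a \<Rightarrow> real) \<Rightarrow> bool" where
  "p_metric p M d \<longleftrightarrow>
     (\<forall>u\<in>M. \<forall>v\<in>M. d u v \<ge> 0 \<and> (d u v = 0 \<longleftrightarrow> u = v) \<and> d u v = d v u) \<and>
     (\<forall>u\<in>M. \<forall>v\<in>M. \<forall>w\<in>M. d u w powr p \<le> d u v powr p + d v w powr p)"

definition p_norm :: "real \<Rightarrow> ('v::real_vector \<Rightarrow> real) \<Rightarrow> bool" where
  "p_norm p N \<longleftrightarrow>
     (\<forall>v. N v \<ge> 0) \<and> (\<forall>v. N v = 0 \<longleftrightarrow> v = 0) \<and>
     (\<forall>t v. N (t *\<^sub>R v) = \<bar>t\<bar> * N v) \<and>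
     (\<forall>v w. N (v + w) powr p \<le> N v powr p + N w powr p)"

definition p_banach :: "real \<Rightarrow> ('v::real_vector \<Rightarrow> real) \<Rightarrow> bool" where
  "p_banach p N \<longleftrightarrow> p_norm p N \<and>
     (\<forall>X :: nat \<Rightarrow> 'v. (\<forall>e>0. \<exists>K. \<forall>m\<ge>K. \<forall>n\<ge>K. N (X m - X n) < e)
        \<longrightarrow> (\<exists>L. (\<lambda>n. N (X n - L)) \<longlonglongrightarrow> 0))"

definition lip1_pointed :: "'a set \<Rightarrow> ('a \<Rightarrow> 'a \<Rightarrow> real) \<Rightarrow> 'a \<Rightarrow> ('v::real_vector \<Rightarrow> real) \<Rightarrow> ('a \<Rightarrow> 'v) \<Rightarrow> bool" where
  "lip1_pointed M d z N f \<longleftrightarrow> f z = 0 \<and> (\<forall>u\<in>M. \<forall>v\<in>M. N (f u - f v) \<le> d u v)"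

end

theory Submission imports Defs begin


lemma powr_concave_pos:
  assumes "0 < p" "p \<le> 1"
  shows "concave_on {0<..} (\<lambda>x::real. x powr p)"
proof (rule f''_le0_imp_concave[where f' = "\<lambda>x. p * x powr (p - 1)" and f'' = "\<lambda>x. p * ((p - 1) * x powr (p - 1 - 1))"])
  show "convex {0::real<..}" by simp
  fix x :: real assume x: "x \<in> {0<..}"
  show "((\<lambda>x. x powr p) has_real_derivative p * x powr (p - 1)) (at x)"
    using x by (auto intro!: derivative_eq_intros)
  show "((\<lambda>x. p * x powr (p - 1)) has_real_derivative p * ((p - 1) * x powr (p - 1 - 1))) (at x)"
    using x by (auto intro!: derivative_eq_intros)
  show "p * ((p - 1) * x powr (p - 1 - 1)) \<le> 0"
    using assms x by (simp add: mult_nonneg_nonpos mult_nonpos_nonneg)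
qed

lemma powr_conc:
  fixes x y l p :: real
  assumes "0 < p" "p \<le> 1" "0 \<le> x" "0 \<le> y" "0 \<le> l" "l \<le> 1"
  shows "(1 - l) * x powr p + l * y powr p \<le> ((1 - l) * x + l * y) powr p"
proof -
  have aux: "t * u powr p \<le> (t * u) powr p" if "0 \<le> t" "t \<le> 1" "0 \<le> u" for t u :: real
  proof -
    have "t = t powr 1" using that by simp
    also have "\<dots> \<le> t powr p" using that assms by (intro powr_mono') auto
    finally have "t * u powr p \<le> t powr p * u powr p"
      using that by (simp add: mult_right_mono)
    then show ?thesis using that by (simp add: powr_mult)
  qed
  show ?thesis
  proof (cases "x = 0 \<or> y = 0")
    case True
    then show ?thesis
    proof
      assume "x = 0" then show ?thesis using aux[of l y] assms by simp
    next
      assume "y = 0" then show ?thesis using aux[of "1 - l" x] assms by simp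
    qed
  next
    case False
    with assms have "x \<in> {0<..}" "y \<in> {0<..}" by auto
    from concave_onD[OF powr_concave_pos[OF assms(1,2)] assms(5,6) this]
    show ?thesis by simp
  qed
qed

lemma powr_subadd:
  fixes x y p :: real
  assumes "0 < p" "p \<le> 1" "0 \<le> x" "0 \<le> y"
  shows "(x + y) powr p \<le> x powr p + y powr p"
proof (cases "x + y = 0")
  case True then show ?thesis using assms by simp
next
  case False
  then have s: "x + y > 0" using assms by simp
  have "x / (x + y) * (x + y) powr p \<le> x powr p"
    using powr_conc[OF assms(1,2), of 0 "x + y" "x / (x+y)"] assms s by simp
  moreover have "y / (x + y) * (x + y) powr p \<le> y powr p"
    using powr_conc[OF assms(1,2), of 0 "x + y" "y / (x+y)"] assms s by simp
  moreover have "x / (x + y) * (x + y) powr p + y / (x + y) * (x + y) powr p = (x + y) powr p"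
  proof -
    have "x / (x + y) + y / (x + y) = 1" using s by (simp add: add_divide_distrib[symmetric])
    then show ?thesis by (metis distrib_right mult_1)
  qed
  ultimately show ?thesis by linarith
qed

lemma abs_powr_subadd:
  fixes u v p :: real
  assumes "0 < p" "p \<le> 1"
  shows "\<bar>u + v\<bar> powr p \<le> \<bar>u\<bar> powr p + \<bar>v\<bar> powr p"
proof -
  have "\<bar>u + v\<bar> powr p \<le> (\<bar>u\<bar> + \<bar>v\<bar>) powr p"
    using assms by (intro powr_mono2) auto
  also have "\<dots> \<le> \<bar>u\<bar> powr p + \<bar>v\<bar> powr p" using powr_subadd assms by simp
  finally show ?thesis .
qed



definition hh :: "real \<Rightarrow> real \<Rightarrow> real \<Rightarrow> real" where
  "hh p c t = \<bar>t - c\<bar> powr p"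

lemma hh_nonneg: "0 \<le> hh p c t" by (simp add: hh_def)

lemma hh_seg:
  assumes "0 < p" "p \<le> 1" "l < r" "l \<le> t" "t \<le> r" "c \<le> l \<or> r \<le> c"
  shows "(1 - (t - l) / (r - l)) * hh p c l + ((t - l) / (r - l)) * hh p c r \<le> hh p c t"
proof -
  define lam where "lam = (t - l) / (r - l)"
  have l0: "0 \<le> lam" "lam \<le> 1" using assms by (auto simp: lam_def field_simps)
  have eq: "\<bar>t - c\<bar> = (1 - lam) * \<bar>l - c\<bar> + lam * \<bar>r - c\<bar>"
  proof -
    have t: "t = l + lam * (r - l)" using assms by (simp add: lam_def)
    show ?thesis using assms(6)
    proof
      assume "c \<le> l"
      then have "\<bar>t - c\<bar> = t - c" "\<bar>l - c\<bar> = l - c" "\<bar>r - c\<bar> = r - c" using assms by auto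
      moreover have "t - c = (1 - lam) * (l - c) + lam * (r - c)" using t by (simp add: algebra_simps)
      ultimately show ?thesis by simp
    next
      assume "r \<le> c"
      then have "\<bar>t - c\<bar> = c - t" "\<bar>l - c\<bar> = c - l" "\<bar>r - c\<bar> = c - r" using assms by auto
      moreover have "c - t = (1 - lam) * (c - l) + lam * (c - r)" using t by (simp add: algebra_simps)
      ultimately show ?thesis by simp
    qed
  qed
  show ?thesis unfolding lam_def[symmetric] hh_def eq
    using powr_conc[OF assms(1,2) abs_ge_zero abs_ge_zero l0] by simp
qed

lemma hh_mono_left:
  assumes "0 < p" "t \<le> l" "l \<le> c"
  shows "hh p c l \<le> hh p c t"
  unfolding hh_def using assms by (intro powr_mono2) auto

lemma hh_mono_right:
  assumes "0 < p" "r \<le> t" "c \<le> r"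
  shows "hh p c r \<le> hh p c t"
  unfolding hh_def using assms by (intro powr_mono2) auto

definition G3 where
  "G3 p W1 c1 W2 c2 W3 c3 t = W1 * hh p c1 t + W2 * hh p c2 t + W3 * hh p c3 t"

lemma G3_seg:
  assumes "0 < p" "p \<le> 1" "l < r" "l \<le> t" "t \<le> r"
    "c1 \<le> l \<or> r \<le> c1" "c2 \<le> l \<or> r \<le> c2" "c3 \<le> l \<or> r \<le> c3"
    "0 \<le> W1" "0 \<le> W2" "0 \<le> W3"
  shows "min (G3 p W1 c1 W2 c2 W3 c3 l) (G3 p W1 c1 W2 c2 W3 c3 r) \<le> G3 p W1 c1 W2 c2 W3 c3 t"
proof -
  define lam where "lam = (t - l) / (r - l)"
  have l0: "0 \<le> lam" "lam \<le> 1" using assms by (auto simp: lam_def field_simps)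
  note s1 = hh_seg[OF assms(1-5) assms(6), folded lam_def]
  note s2 = hh_seg[OF assms(1-5) assms(7), folded lam_def]
  note s3 = hh_seg[OF assms(1-5) assms(8), folded lam_def]
  have "(1 - lam) * G3 p W1 c1 W2 c2 W3 c3 l + lam * G3 p W1 c1 W2 c2 W3 c3 r
     = W1 * ((1 - lam) * hh p c1 l + lam * hh p c1 r) + W2 * ((1 - lam) * hh p c2 l + lam * hh p c2 r)
       + W3 * ((1 - lam) * hh p c3 l + lam * hh p c3 r)"
    by (simp add: G3_def algebra_simps)
  also have "\<dots> \<le> G3 p W1 c1 W2 c2 W3 c3 t"
    unfolding G3_def using s1 s2 s3 assms(9-11)
    by (intro add_mono mult_left_mono) auto
  finally have *: "(1 - lam) * G3 p W1 c1 W2 c2 W3 c3 l + lam * G3 p W1 c1 W2 c2 W3 c3 r \<le> G3 p W1 c1 W2 c2 W3 c3 t" .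
  have "min (G3 p W1 c1 W2 c2 W3 c3 l) (G3 p W1 c1 W2 c2 W3 c3 r) \<le> (1 - lam) * G3 p W1 c1 W2 c2 W3 c3 l + lam * G3 p W1 c1 W2 c2 W3 c3 r"
  proof -
    let ?m = "min (G3 p W1 c1 W2 c2 W3 c3 l) (G3 p W1 c1 W2 c2 W3 c3 r)"
    have "(1 - lam) * ?m \<le> (1 - lam) * G3 p W1 c1 W2 c2 W3 c3 l" using l0 by (intro mult_left_mono) auto
    moreover have "lam * ?m \<le> lam * G3 p W1 c1 W2 c2 W3 c3 r" using l0 by (intro mult_left_mono) auto
    ultimately show ?thesis by (simp add: algebra_simps)
  qed
  with * show ?thesis by linarith
qed

lemma G3_ordered:
  assumes "0 < p" "p \<le> 1" "c1 \<le> c2" "c2 \<le> c3" "0 \<le> W1" "0 \<le> W2" "0 \<le> W3"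
  shows "min (G3 p W1 c1 W2 c2 W3 c3 c1) (min (G3 p W1 c1 W2 c2 W3 c3 c2) (G3 p W1 c1 W2 c2 W3 c3 c3))
         \<le> G3 p W1 c1 W2 c2 W3 c3 t"
proof -
  consider "t \<le> c1" | "c1 < t" "t < c2" | "c2 \<le> t" "t \<le> c3" | "c3 < t" by linarith
  then show ?thesis
  proof cases
    case 1
    have "G3 p W1 c1 W2 c2 W3 c3 c1 \<le> G3 p W1 c1 W2 c2 W3 c3 t"
      unfolding G3_def using assms 1
      by (intro add_mono mult_left_mono hh_mono_left) auto
    then show ?thesis by linarith
  next
    case 2
    have "min (G3 p W1 c1 W2 c2 W3 c3 c1) (G3 p W1 c1 W2 c2 W3 c3 c2) \<le> G3 p W1 c1 W2 c2 W3 c3 t"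
      using assms 2 by (intro G3_seg) auto
    then show ?thesis by linarith
  next
    case 3
    show ?thesis
    proof (cases "c2 = c3")
      case True then have "t = c2" using 3 by simp
      then show ?thesis by (simp add: min_def)
    next
      case False
      have "min (G3 p W1 c1 W2 c2 W3 c3 c2) (G3 p W1 c1 W2 c2 W3 c3 c3) \<le> G3 p W1 c1 W2 c2 W3 c3 t"
        using assms 3 False by (intro G3_seg) auto
      then show ?thesis by linarith
    qed
  next
    case 4
    have "G3 p W1 c1 W2 c2 W3 c3 c3 \<le> G3 p W1 c1 W2 c2 W3 c3 t"
      unfolding G3_def using assms 4
      by (intro add_mono mult_left_mono hh_mono_right) auto
    then show ?thesis by linarith
  qed
qed

lemma G3_perm12: "G3 p W1 c1 W2 c2 W3 c3 t = G3 p W2 c2 W1 c1 W3 c3 t"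
  by (simp add: G3_def algebra_simps)
lemma G3_perm23: "G3 p W1 c1 W2 c2 W3 c3 t = G3 p W1 c1 W3 c3 W2 c2 t"
  by (simp add: G3_def algebra_simps)

lemma G3_min:
  assumes "0 < p" "p \<le> 1" "0 \<le> W1" "0 \<le> W2" "0 \<le> W3"
  shows "min (G3 p W1 c1 W2 c2 W3 c3 c1) (min (G3 p W1 c1 W2 c2 W3 c3 c2) (G3 p W1 c1 W2 c2 W3 c3 c3))
         \<le> G3 p W1 c1 W2 c2 W3 c3 t"
proof -
  consider "c1 \<le> c2" "c2 \<le> c3" | "c1 \<le> c3" "c3 \<le> c2" | "c2 \<le> c1" "c1 \<le> c3"
    | "c2 \<le> c3" "c3 \<le> c1" | "c3 \<le> c1" "c1 \<le> c2" | "c3 \<le> c2" "c2 \<le> c1" by linarith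
  then show ?thesis
  proof cases
    case 1 then show ?thesis using G3_ordered assms by blast
  next
    case 2 then show ?thesis using G3_ordered[OF assms(1,2) 2 assms(3,5,4), of t] 
      unfolding G3_perm23[of p W1 c1 W2 c2 W3 c3] by linarith
  next
    case 3 then show ?thesis using G3_ordered[OF assms(1,2) 3 assms(4,3,5), of t] 
      unfolding G3_perm12[of p W1 c1 W2 c2 W3 c3] by linarith
  next
    case 4 then show ?thesis using G3_ordered[OF assms(1,2) 4 assms(4,5,3), of t] 
      unfolding G3_perm12[of p W1 c1 W2 c2 W3 c3] G3_perm23[of p W2 c2 W1 c1 W3 c3] by linarith
  next
    case 5 then show ?thesis using G3_ordered[OF assms(1,2) 5 assms(5,3,4), of t] 
      unfolding G3_perm23[of p W1 c1 W2 c2 W3 c3] G3_perm12[of p W1 c1 W3 c3 W2 c2] by linarith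
  next
    case 6 then show ?thesis using G3_ordered[OF assms(1,2) 6 assms(5,4,3), of t] 
      unfolding G3_perm12[of p W1 c1 W2 c2 W3 c3] G3_perm23[of p W2 c2 W1 c1 W3 c3]
        G3_perm12[of p W2 c2 W3 c3 W1 c1] by linarith
  qed
qed



definition Fm :: "real \<Rightarrow> real \<Rightarrow> real \<Rightarrow> real \<Rightarrow> real \<Rightarrow> real \<Rightarrow> real" where
  "Fm p A B C a b = min (\<bar>a * A\<bar> powr p + \<bar>b * B\<bar> powr p)
                 (min (\<bar>(a + b) * A\<bar> powr p + \<bar>b * C\<bar> powr p)
                      (\<bar>(a + b) * B\<bar> powr p + \<bar>a * C\<bar> powr p))"

definition GG where "GG p A B C a b t = G3 p (A powr p) a (B powr p) (-b) (C powr p) 0 t"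

lemma GG_vals:
  assumes "0 < p" "0 \<le> A" "0 \<le> B" "0 \<le> C"
  shows "GG p A B C a b a = \<bar>(a + b) * B\<bar> powr p + \<bar>a * C\<bar> powr p"
    "GG p A B C a b (-b) = \<bar>(a + b) * A\<bar> powr p + \<bar>b * C\<bar> powr p"
    "GG p A B C a b 0 = \<bar>a * A\<bar> powr p + \<bar>b * B\<bar> powr p"
proof -
  have e1: "\<bar>-b - a\<bar> = \<bar>a + b\<bar>" "\<bar>a - - b\<bar> = \<bar>a + b\<bar>" "\<bar>0 - a\<bar> = \<bar>a\<bar>" "\<bar>0 - - b\<bar> = \<bar>b\<bar>" by arith+
  have h: "hh p a a = 0" "hh p (-b) a = \<bar>a+b\<bar> powr p" "hh p 0 a = \<bar>a\<bar> powr p"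
    "hh p a (-b) = \<bar>a+b\<bar> powr p" "hh p (-b) (-b) = 0" "hh p 0 (-b) = \<bar>b\<bar> powr p"
    "hh p a 0 = \<bar>a\<bar> powr p" "hh p (-b) 0 = \<bar>b\<bar> powr p" "hh p 0 0 = 0"
    unfolding hh_def using assms(1) e1 by simp_all
  have m: "\<bar>x * D\<bar> powr p = D powr p * \<bar>x\<bar> powr p" if "0 \<le> D" for x D
    using that by (simp add: abs_mult powr_mult mult.commute)
  show "GG p A B C a b a = \<bar>(a + b) * B\<bar> powr p + \<bar>a * C\<bar> powr p"
    "GG p A B C a b (-b) = \<bar>(a + b) * A\<bar> powr p + \<bar>b * C\<bar> powr p"
    "GG p A B C a b 0 = \<bar>a * A\<bar> powr p + \<bar>b * B\<bar> powr p"
    unfolding GG_def G3_def h m[OF assms(2)] m[OF assms(3)] m[OF assms(4)] by simp_all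
qed

lemma min3_rev: "min (z::real) (min y x) \<le> g \<Longrightarrow> min x (min y z) \<le> g"
  by (simp add: min_def split: if_splits)

lemma Fm_le_GG:
  assumes "0 < p" "p \<le> 1" "0 \<le> A" "0 \<le> B" "0 \<le> C"
  shows "Fm p A B C a b \<le> GG p A B C a b t"
proof -
  have "min (GG p A B C a b a) (min (GG p A B C a b (-b)) (GG p A B C a b 0)) \<le> GG p A B C a b t"
    unfolding GG_def using assms by (intro G3_min) auto
  then have "min (\<bar>(a + b) * B\<bar> powr p + \<bar>a * C\<bar> powr p) (min (\<bar>(a + b) * A\<bar> powr p + \<bar>b * C\<bar> powr p) (\<bar>a * A\<bar> powr p + \<bar>b * B\<bar> powr p)) \<le> GG p A B C a b t"
    by (simp only: GG_vals[OF assms(1,3-5)])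
  then show ?thesis unfolding Fm_def by (rule min3_rev)
qed

lemma Fm_attained:
  assumes "0 < p" "0 \<le> A" "0 \<le> B" "0 \<le> C"
  shows "\<exists>t. Fm p A B C a b = GG p A B C a b t"
proof -
  have "Fm p A B C a b = GG p A B C a b 0 \<or> Fm p A B C a b = GG p A B C a b (-b) \<or> Fm p A B C a b = GG p A B C a b a"
    unfolding GG_vals[OF assms, of a b] Fm_def by (simp add: min_def)
  then show ?thesis by blast
qed

lemma GG_sub:
  assumes "0 < p" "p \<le> 1" "0 \<le> A" "0 \<le> B" "0 \<le> C"
  shows "GG p A B C (a + a') (b + b') (t + t') \<le> GG p A B C a b t + GG p A B C a' b' t'"
proof -
  have h: "hh p (c + c') (t + t') \<le> hh p c t + hh p c' t'" for c c'
  proof -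
    have "hh p (c + c') (t + t') = \<bar>(t - c) + (t' - c')\<bar> powr p" by (simp add: hh_def algebra_simps)
    also have "\<dots> \<le> hh p c t + hh p c' t'" unfolding hh_def using abs_powr_subadd assms by blast
    finally show ?thesis .
  qed
  have "GG p A B C (a + a') (b + b') (t + t') =
    A powr p * hh p (a + a') (t + t') + B powr p * hh p (-b + -b') (t + t') + C powr p * hh p (0 + 0) (t + t')"
    by (simp add: GG_def G3_def)
  also have "\<dots> \<le> A powr p * (hh p a t + hh p a' t') + B powr p * (hh p (-b) t + hh p (-b') t') + C powr p * (hh p 0 t + hh p 0 t')"
    by (intro add_mono mult_left_mono h) auto
  also have "\<dots> = GG p A B C a b t + GG p A B C a' b' t'"
    by (simp add: GG_def G3_def algebra_simps)
  finally show ?thesis .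
qed

lemma Fm_sub:
  assumes "0 < p" "p \<le> 1" "0 \<le> A" "0 \<le> B" "0 \<le> C"
  shows "Fm p A B C (a + a') (b + b') \<le> Fm p A B C a b + Fm p A B C a' b'"
proof -
  obtain t where t: "Fm p A B C a b = GG p A B C a b t" using Fm_attained assms by blast
  obtain t' where t': "Fm p A B C a' b' = GG p A B C a' b' t'" using Fm_attained assms by blast
  show ?thesis using Fm_le_GG[OF assms, of "a + a'" "b + b'" "t + t'"] GG_sub[OF assms, of a a' b b' t t'] t t'
    by linarith
qed

lemma Fm_scale:
  assumes "0 < p"
  shows "Fm p A B C (k * a) (k * b) = \<bar>k\<bar> powr p * Fm p A B C a b"
proof -
  have e: "\<bar>k * x * y\<bar> powr p = \<bar>k\<bar> powr p * \<bar>x * y\<bar> powr p" for x y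
    by (simp add: abs_mult powr_mult)
  have e2: "(k * a + k * b) = k * (a + b)" by (simp add: algebra_simps)
  show ?thesis unfolding Fm_def e2 e
    by (simp add: min_mult_distrib_left distrib_left)
qed

lemma Fm_nonneg: "0 \<le> Fm p A B C a b"
  by (simp add: Fm_def)

lemma Fm_zero: "0 < p \<Longrightarrow> Fm p A B C 0 0 = 0"
  by (simp add: Fm_def)

lemma Fm_lower:
  assumes "0 < p" "p \<le> 1" "0 \<le> A" "0 \<le> B" "0 \<le> C"
  defines "w \<equiv> min (A powr p) (min (B powr p) (C powr p))"
  shows "w * \<bar>a\<bar> powr p \<le> Fm p A B C a b" "w * \<bar>b\<bar> powr p \<le> Fm p A B C a b"
proof -
  have w: "0 \<le> w" "w \<le> A powr p" "w \<le> B powr p" "w \<le> C powr p" by (auto simp: w_def)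
  have m: "w * \<bar>x\<bar> powr p \<le> \<bar>x * D\<bar> powr p" if "w \<le> D powr p" "0 \<le> D" for x D
  proof -
    have "w * \<bar>x\<bar> powr p \<le> D powr p * \<bar>x\<bar> powr p" using that by (intro mult_right_mono) auto
    then show ?thesis using that by (simp add: abs_mult powr_mult mult.commute)
  qed
  have sa: "w * \<bar>a\<bar> powr p \<le> w * \<bar>a + b\<bar> powr p + w * \<bar>b\<bar> powr p"
    using mult_left_mono[OF abs_powr_subadd[OF assms(1,2), of "a + b" "-b"] w(1)] by (simp add: distrib_left)
  have sb: "w * \<bar>b\<bar> powr p \<le> w * \<bar>a + b\<bar> powr p + w * \<bar>a\<bar> powr p"
    using mult_left_mono[OF abs_powr_subadd[OF assms(1,2), of "a + b" "-a"] w(1)] by (simp add: distrib_left)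
  have x1: "0 \<le> \<bar>y\<bar> powr p" for y :: real by simp
  show "w * \<bar>a\<bar> powr p \<le> Fm p A B C a b"
    unfolding Fm_def using m[OF w(2) assms(3), of a] m[OF w(4) assms(5), of a] m[OF w(2) assms(3), of "a+b"] m[OF w(4) assms(5), of b]
      sa x1[of "b * B"] x1[of "(a+b)*B"]
    by (intro min.boundedI; linarith)
  show "w * \<bar>b\<bar> powr p \<le> Fm p A B C a b"
    unfolding Fm_def using m[OF w(3) assms(4), of b] m[OF w(4) assms(5), of b] m[OF w(3) assms(4), of "a+b"] m[OF w(4) assms(5), of a]
      sb x1[of "a * A"] x1[of "(a+b)*A"]
    by (intro min.boundedI; linarith)
qed



definition NN :: "real \<Rightarrow> real \<Rightarrow> real \<Rightarrow> real \<Rightarrow> real \<times> real \<Rightarrow> real" where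
  "NN p A B C v = Fm p A B C (fst v) (snd v) powr (1 / p)"

lemma NN_powr:
  assumes "0 < p"
  shows "NN p A B C v powr p = Fm p A B C (fst v) (snd v)"
proof -
  have "NN p A B C v powr p = Fm p A B C (fst v) (snd v) powr (1 / p * p)"
    unfolding NN_def by (simp add: powr_powr)
  also have "\<dots> = Fm p A B C (fst v) (snd v)" using assms Fm_nonneg by (simp add: powr_one)
  finally show ?thesis .
qed

lemma NN_le:
  assumes "0 < p" "0 \<le> K" "Fm p A B C (fst v) (snd v) \<le> K powr p"
  shows "NN p A B C v \<le> K"
proof -
  have "NN p A B C v \<le> (K powr p) powr (1 / p)"
    unfolding NN_def using assms Fm_nonneg by (intro powr_mono2) auto
  also have "\<dots> = K" using assms by (simp add: powr_powr powr_one)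
  finally show ?thesis .
qed

lemma NN_lower:
  assumes "0 < p" "p \<le> 1" "0 \<le> A" "0 \<le> B" "0 \<le> C"
  defines "w \<equiv> min (A powr p) (min (B powr p) (C powr p))"
  shows "w powr (1/p) * \<bar>fst v\<bar> \<le> NN p A B C v" "w powr (1/p) * \<bar>snd v\<bar> \<le> NN p A B C v"
proof -
  have w: "0 \<le> w" by (simp add: w_def)
  have r: "(w * \<bar>x\<bar> powr p) powr (1/p) = w powr (1/p) * \<bar>x\<bar>" for x
    using assms w by (simp add: powr_mult powr_powr powr_one)
  show "w powr (1/p) * \<bar>fst v\<bar> \<le> NN p A B C v"
    unfolding NN_def r[symmetric] using Fm_lower(1)[OF assms(1-5), where a="fst v" and b="snd v"] w assms
    by (intro powr_mono2) (auto simp: w_def)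
  show "w powr (1/p) * \<bar>snd v\<bar> \<le> NN p A B C v"
    unfolding NN_def r[symmetric] using Fm_lower(2)[OF assms(1-5), where a="fst v" and b="snd v"] w assms
    by (intro powr_mono2) (auto simp: w_def)
qed

lemma NN_banach:
  assumes "0 < p" "p \<le> 1" "0 < A" "0 < B" "0 < C"
  shows "p_banach p (NN p A B C)"
proof -
  define w where "w = min (A powr p) (min (B powr p) (C powr p))"
  have wpos: "0 < w" using assms by (simp add: w_def)
  define c where "c = w powr (1/p)"
  have cpos: "0 < c" using wpos by (simp add: c_def)
  have low: "c * \<bar>fst v\<bar> \<le> NN p A B C v" "c * \<bar>snd v\<bar> \<le> NN p A B C v" for v
    using NN_lower[OF assms(1,2), of A B C v] assms unfolding c_def w_def by auto
  have pn: "p_norm p (NN p A B C)"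
    unfolding p_norm_def
  proof (intro conjI allI)
    fix v show "0 \<le> NN p A B C v" by (simp add: NN_def)
  next
    fix v :: "real \<times> real"
    show "NN p A B C v = 0 \<longleftrightarrow> v = 0"
    proof
      assume "NN p A B C v = 0"
      then have "fst v = 0" "snd v = 0" using low[of v] cpos
        by (auto simp: mult_le_0_iff)
      then show "v = 0" by (simp add: prod_eq_iff)
    next
      assume "v = 0" then show "NN p A B C v = 0" using assms by (simp add: NN_def Fm_zero)
    qed
  next
    fix t and v :: "real \<times> real"
    have "NN p A B C (t *\<^sub>R v) = (\<bar>t\<bar> powr p * Fm p A B C (fst v) (snd v)) powr (1/p)"
      unfolding NN_def using Fm_scale[OF assms(1)] by simp
    also have "\<dots> = \<bar>t\<bar> * NN p A B C v"
      unfolding NN_def using assms Fm_nonneg by (simp add: powr_mult powr_powr powr_one)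
    finally show "NN p A B C (t *\<^sub>R v) = \<bar>t\<bar> * NN p A B C v" .
  next
    fix v w :: "real \<times> real"
    show "NN p A B C (v + w) powr p \<le> NN p A B C v powr p + NN p A B C w powr p"
      unfolding NN_powr[OF assms(1)] using Fm_sub[OF assms(1,2)] assms by simp
  qed
  have compl: "\<exists>L. (\<lambda>n. NN p A B C (X n - L)) \<longlonglongrightarrow> 0"
    if X: "\<forall>e>0. \<exists>K. \<forall>m\<ge>K. \<forall>n\<ge>K. NN p A B C (X m - X n) < e" for X :: "nat \<Rightarrow> real \<times> real"
  proof -
    have "Cauchy (\<lambda>n. fst (X n))"
      unfolding Cauchy_iff real_norm_def
    proof (intro allI impI)
      fix e :: real assume "0 < e"
      then obtain K where K: "\<forall>m\<ge>K. \<forall>n\<ge>K. NN p A B C (X m - X n) < c * e"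
        using X cpos by (meson mult_pos_pos)
      show "\<exists>M. \<forall>m\<ge>M. \<forall>n\<ge>M. \<bar>fst (X m) - fst (X n)\<bar> < e"
      proof (intro exI allI impI)
        fix m n assume "K \<le> m" "K \<le> n"
        then have "c * \<bar>fst (X m) - fst (X n)\<bar> < c * e" using K low[of "X m - X n"] by force
        then show "\<bar>fst (X m) - fst (X n)\<bar> < e" using cpos by simp
      qed
    qed
    then obtain L1 where L1: "(\<lambda>n. fst (X n)) \<longlonglongrightarrow> L1"
      using Cauchy_convergent_iff convergent_def by blast
    have "Cauchy (\<lambda>n. snd (X n))"
      unfolding Cauchy_iff real_norm_def
    proof (intro allI impI)
      fix e :: real assume "0 < e"
      then obtain K where K: "\<forall>m\<ge>K. \<forall>n\<ge>K. NN p A B C (X m - X n) < c * e"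
        using X cpos by (meson mult_pos_pos)
      show "\<exists>M. \<forall>m\<ge>M. \<forall>n\<ge>M. \<bar>snd (X m) - snd (X n)\<bar> < e"
      proof (intro exI allI impI)
        fix m n assume "K \<le> m" "K \<le> n"
        then have "c * \<bar>snd (X m) - snd (X n)\<bar> < c * e" using K low[of "X m - X n"] by force
        then show "\<bar>snd (X m) - snd (X n)\<bar> < e" using cpos by simp
      qed
    qed
    then obtain L2 where L2: "(\<lambda>n. snd (X n)) \<longlonglongrightarrow> L2"
      using Cauchy_convergent_iff convergent_def by blast
    define ub where "ub n = (\<bar>(fst (X n) - L1) * A\<bar> powr p + \<bar>(snd (X n) - L2) * B\<bar> powr p) powr (1/p)" for n
    have ub0: "ub \<longlonglongrightarrow> 0"
    proof -
      have t1: "(\<lambda>n. \<bar>(fst (X n) - L1) * A\<bar> powr p) \<longlonglongrightarrow> \<bar>(L1 - L1) * A\<bar> powr p"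
        using L1 assms by (intro tendsto_intros) auto
      have t2: "(\<lambda>n. \<bar>(snd (X n) - L2) * B\<bar> powr p) \<longlonglongrightarrow> \<bar>(L2 - L2) * B\<bar> powr p"
        using L2 assms by (intro tendsto_intros) auto
      have "ub \<longlonglongrightarrow> (\<bar>(L1 - L1) * A\<bar> powr p + \<bar>(L2 - L2) * B\<bar> powr p) powr (1/p)"
        unfolding ub_def using t1 t2 assms L1 L2 by (intro tendsto_intros) auto
      then show ?thesis using assms by simp
    qed
    have "(\<lambda>n. NN p A B C (X n - (L1, L2))) \<longlonglongrightarrow> 0"
    proof (rule Lim_null_comparison[OF _ ub0])
      show "\<forall>\<^sub>F n in sequentially. norm (NN p A B C (X n - (L1, L2))) \<le> ub n"
      proof (intro always_eventually allI)
        fix n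
        have "NN p A B C (X n - (L1, L2)) \<le> ub n"
          unfolding NN_def ub_def
          using assms by (intro powr_mono2) (auto simp: Fm_def)
        then show "norm (NN p A B C (X n - (L1, L2))) \<le> ub n" by (simp add: NN_def)
      qed
    qed
    then show ?thesis by blast
  qed
  show ?thesis unfolding p_banach_def using pn compl by blast
qed



lemma pnorm_scale_bound:
  assumes "p_norm p N" "0 < p" "N w \<le> K"
  shows "N (k *\<^sub>R w) powr p \<le> \<bar>k * K\<bar> powr p"
proof -
  have N0: "0 \<le> N w" and hom: "N (k *\<^sub>R w) = \<bar>k\<bar> * N w"
    using assms(1) unfolding p_norm_def by auto
  have K0: "0 \<le> K" using N0 assms(3) by linarith
  have "\<bar>k\<bar> * N w \<le> \<bar>k * K\<bar>" using assms(3) K0 by (simp add: abs_mult mult_left_mono)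
  then show ?thesis unfolding hom using N0 assms(2) by (intro powr_mono2) auto
qed

lemma upper_part:
  assumes "p_norm p N" "0 < p" "N u \<le> A" "N v \<le> B" "N (u - v) \<le> C"
  shows "N (a *\<^sub>R u + b *\<^sub>R v) powr p \<le> Fm p A B C a b"
proof -
  have tri: "N (s + t) powr p \<le> N s powr p + N t powr p" for s t
    using assms(1) unfolding p_norm_def by blast
  have sc: "N (k *\<^sub>R w) powr p \<le> \<bar>k * K\<bar> powr p" if "N w \<le> K" for k w K
    using pnorm_scale_bound[OF assms(1,2) that] .
  have 1: "N (a *\<^sub>R u + b *\<^sub>R v) powr p \<le> \<bar>a * A\<bar> powr p + \<bar>b * B\<bar> powr p"
    using tri[of "a *\<^sub>R u" "b *\<^sub>R v"] sc[OF assms(3), of a] sc[OF assms(4), of b] by linarith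
  have e2: "a *\<^sub>R u + b *\<^sub>R v = (a + b) *\<^sub>R u + (-b) *\<^sub>R (u - v)"
    by (simp add: algebra_simps)
  have 2: "N (a *\<^sub>R u + b *\<^sub>R v) powr p \<le> \<bar>(a + b) * A\<bar> powr p + \<bar>b * C\<bar> powr p"
    unfolding e2 using tri[of "(a + b) *\<^sub>R u" "(-b) *\<^sub>R (u - v)"] sc[OF assms(3), of "a + b"] sc[OF assms(5), of "-b"]
    by simp
  have e3: "a *\<^sub>R u + b *\<^sub>R v = (a + b) *\<^sub>R v + a *\<^sub>R (u - v)"
    by (simp add: algebra_simps)
  have 3: "N (a *\<^sub>R u + b *\<^sub>R v) powr p \<le> \<bar>(a + b) * B\<bar> powr p + \<bar>a * C\<bar> powr p"
    unfolding e3 using tri[of "(a + b) *\<^sub>R v" "a *\<^sub>R (u - v)"] sc[OF assms(4), of "a + b"] sc[OF assms(5), of a]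
    by linarith
  show ?thesis unfolding Fm_def using 1 2 3 by simp
qed

lemma Fm_units:
  assumes "0 < p" "0 \<le> A" "0 \<le> B" "0 \<le> C"
  shows "Fm p A B C 1 0 \<le> A powr p" "Fm p A B C (-1) 0 \<le> A powr p"
    "Fm p A B C 0 1 \<le> B powr p" "Fm p A B C 0 (-1) \<le> B powr p"
    "Fm p A B C 1 (-1) \<le> C powr p" "Fm p A B C (-1) 1 \<le> C powr p"
  using assms by (simp_all add: Fm_def min_le_iff_disj)

theorem corollary2p7:
  fixes p :: real and d :: "'a \<Rightarrow> 'a \<Rightarrow> real" and z x y :: 'a and a b :: real
  assumes "0 < p" and "p \<le> 1"
    and "p_metric p {z, x, y} d"
    and "x \<noteq> z" and "y \<noteq> z" and "x \<noteq> y"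
  defines "m \<equiv> min (\<bar>a * d x z\<bar> powr p + \<bar>b * d y z\<bar> powr p)
                 (min (\<bar>(a + b) * d x z\<bar> powr p + \<bar>b * d x y\<bar> powr p)
                      (\<bar>(a + b) * d y z\<bar> powr p + \<bar>a * d x y\<bar> powr p))"
  shows "(\<forall>(N :: 'v::real_vector \<Rightarrow> real) f. p_banach p N \<and> lip1_pointed {z, x, y} d z N f
            \<longrightarrow> N (a *\<^sub>R f x + b *\<^sub>R f y) powr p \<le> m)
       \<and> (\<forall>e>0. \<exists>(N :: real \<times> real \<Rightarrow> real) f. p_banach p N \<and> lip1_pointed {z, x, y} d z N f
            \<and> N (a *\<^sub>R f x + b *\<^sub>R f y) powr p > m - e)"
proof -
  have dm: "\<And>u v. u \<in> {z, x, y} \<Longrightarrow> v \<in> {z, x, y} \<Longrightarrow> d u v \<ge> 0 \<and> (d u v = 0 \<longleftrightarrow> u = v) \<and> d u v = d v u"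
    using assms(3) unfolding p_metric_def by blast
  define A where "A = d x z"
  define B where "B = d y z"
  define C where "C = d x y"
  have A: "0 < A" using dm[of x z] assms(4) unfolding A_def by force
  have B: "0 < B" using dm[of y z] assms(5) unfolding B_def by force
  have C: "0 < C" using dm[of x y] assms(6) unfolding C_def by force
  have mF: "m = Fm p A B C a b" unfolding m_def Fm_def A_def B_def C_def ..
  have P1: "N (a *\<^sub>R f x + b *\<^sub>R f y) powr p \<le> m"
    if "p_banach p N" "lip1_pointed {z, x, y} d z N f" for N :: "'v \<Rightarrow> real" and f
  proof -
    have pn: "p_norm p N" using that(1) unfolding p_banach_def by blast
    have fz: "f z = 0" and lip: "\<forall>u\<in>{z,x,y}. \<forall>v\<in>{z,x,y}. N (f u - f v) \<le> d u v"
      using that(2) unfolding lip1_pointed_def by auto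
    have "N (f x) \<le> A" using lip fz unfolding A_def by force
    moreover have "N (f y) \<le> B" using lip fz unfolding B_def by force
    moreover have "N (f x - f y) \<le> C" using lip unfolding C_def by force
    ultimately show ?thesis unfolding mF using upper_part[OF pn assms(1)] by blast
  qed
  define f :: "'a \<Rightarrow> real \<times> real" where
    "f u = (if u = x then (1, 0) else if u = y then (0, 1) else 0)" for u
  have ban: "p_banach p (NN p A B C)" using NN_banach assms(1,2) A B C by blast
  have units: "NN p A B C (1, 0) \<le> A" "NN p A B C (-1, 0) \<le> A"
    "NN p A B C (0, 1) \<le> B" "NN p A B C (0, -1) \<le> B"
    "NN p A B C (1, -1) \<le> C" "NN p A B C (-1, 1) \<le> C"
    using Fm_units[OF assms(1), of A B C] A B C assms(1)
    by (auto intro!: NN_le)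
  have units0: "NN p A B C 0 = 0" using assms(1) by (simp add: NN_def Fm_zero zero_prod_def)
  have dsym: "d z x = A" "d z y = B" "d y x = C"
    using dm[of x z] dm[of y z] dm[of x y] unfolding A_def B_def C_def by auto
  have dz: "d u u = 0" if "u \<in> {z, x, y}" for u using dm[OF that that] by simp
  have fv: "f x = (1, 0)" "f y = (0, 1)" "f z = (0, 0)"
    using assms(4-6) by (auto simp: f_def zero_prod_def)
  have dxz: "d x z = A" "d y z = B" "d x y = C" by (simp_all add: A_def B_def C_def)
  have lip: "lip1_pointed {z, x, y} d z (NN p A B C) f"
    unfolding lip1_pointed_def
  proof (intro conjI ballI)
    show "f z = 0" using fv by (simp add: zero_prod_def)
  next
    fix u v assume u: "u \<in> {z, x, y}" and v: "v \<in> {z, x, y}"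
    have u': "u = z \<or> u = x \<or> u = y" using u by blast
    have v': "v = z \<or> v = x \<or> v = y" using v by blast
    have z0: "NN p A B C (0, 0) = 0" using units0 by (simp add: zero_prod_def)
    show "NN p A B C (f u - f v) \<le> d u v"
      using u' v'
    proof (elim disjE)
    qed (simp_all only: fv dxz dsym dz[OF u] dz[OF v], simp_all add: z0 units units0 A B C less_imp_le dz)
  qed
  have val: "NN p A B C (a *\<^sub>R f x + b *\<^sub>R f y) powr p = m"
    using assms(6) unfolding mF NN_powr[OF assms(1)] by (simp add: f_def)
  have P2: "\<exists>(N :: real \<times> real \<Rightarrow> real) f. p_banach p N \<and> lip1_pointed {z, x, y} d z N f
            \<and> N (a *\<^sub>R f x + b *\<^sub>R f y) powr p > m - e" if "e > 0" for e
  proof -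
    have "NN p A B C (a *\<^sub>R f x + b *\<^sub>R f y) powr p > m - e" using val that by simp
    then show ?thesis using ban lip by blast
  qed
  show ?thesis using P1 P2 by blast
qed


end
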